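(* Let $k=0$ and $f_r(x)=x^2\exp(r-x)$. For every $r\in[2.6,2.9]$, \[ f_r^2(2)<f_r^3(2)<2<f_r(2), \] and, in consequence, $f_r$ (as a self-map of the compact interval $[f_r^2(2),f_r(2)]$) is chaotic in the sense of Li and Yorke, in the sense of Block and Coppel, and in the sense of Devaney.
   Context: Let $X$ be a compact metric space and $f\colon X\to X$ continuous. (Li–Yorke) $f$ is L/Y-chaotic if there is an uncountable $S\subset X$ such that for all $x\neq y$ in $S$: $\limsup_n d(f^n x,f^n y)>0$ and $\liminf_n d(f^n x,f^n y)=0$, and for all $x\in S$ and all periodic $p\in X$: $\limsup_n d(f^n x,f^n p)>0$. (Block–Coppel) $f$ is B/C-chaotic if there are $m\in\mathbb{N}$, a compact $f^m$-invariant $Y\subset X$ and a continuous surjection $h\colon Y\to\Sigma$ with $h\circ f^m=\sigma\circ h$ on $Y$, where $\Sigma=\{0,1\}^{\mathbb{N}}$ with metric $d(\alpha,\beta)=\sum_{i\ge0}|a_i-b_i|/2^i$ and $\sigma$ is the left shift. (Devaney) $f$ is D-chaotic if there is a compact invariant $Y\subset X$ such that $f|_Y$ is topologically transitive, periodic points of $f|_Y$ are dense in $Y$, and $f|_Y$ has sensitive dependence on initial conditions. *)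

theory Defs
  imports "HOL-Analysis.Analysis" "HOL-Library.Liminf_Limsup"
begin

definition fr :: "real \<Rightarrow> real \<Rightarrow> real" where
  "fr r x = x\<^sup>2 * exp (r - x)"

definition periodic_pt :: "('a \<Rightarrow> 'a) \<Rightarrow> 'a \<Rightarrow> bool" where
  "periodic_pt f p \<longleftrightarrow> (\<exists>n>0. (f ^^ n) p = p)"

definition LY_chaotic :: "'a::metric_space set \<Rightarrow> ('a \<Rightarrow> 'a) \<Rightarrow> bool" where
  "LY_chaotic X f \<longleftrightarrow>
     (\<exists>S \<subseteq> X. uncountable S \<and>
        (\<forall>x\<in>S. \<forall>y\<in>S. x \<noteq> y \<longrightarrow>
           limsup (\<lambda>n. ereal (dist ((f ^^ n) x) ((f ^^ n) y))) > 0 \<and>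
           liminf (\<lambda>n. ereal (dist ((f ^^ n) x) ((f ^^ n) y))) = 0) \<and>
        (\<forall>x\<in>S. \<forall>p\<in>X. periodic_pt f p \<longrightarrow>
           limsup (\<lambda>n. ereal (dist ((f ^^ n) x) ((f ^^ n) p))) > 0))"

text \<open>The full one-sided 2-shift: sequences in {0,1} (encoded as nat => bool),
  with metric d(a,b) = sum_i |a_i - b_i| / 2^i, and the left shift.\<close>
definition shift_dist :: "(nat \<Rightarrow> bool) \<Rightarrow> (nat \<Rightarrow> bool) \<Rightarrow> real" where
  "shift_dist a b = (\<Sum>i. \<bar>of_bool (a i) - of_bool (b i)\<bar> / 2 ^ i)"

definition shift :: "(nat \<Rightarrow> bool) \<Rightarrow> (nat \<Rightarrow> bool)" where
  "shift a = (\<lambda>i. a (Suc i))"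

definition BC_chaotic :: "'a::metric_space set \<Rightarrow> ('a \<Rightarrow> 'a) \<Rightarrow> bool" where
  "BC_chaotic X f \<longleftrightarrow>
     (\<exists>m::nat. \<exists>Y h. m \<ge> 1 \<and> Y \<subseteq> X \<and> compact Y \<and> (f ^^ m) ` Y \<subseteq> Y \<and>
        (\<forall>y\<in>Y. \<forall>e>0. \<exists>d>0. \<forall>y'\<in>Y. dist y' y < d \<longrightarrow> shift_dist (h y') (h y) < e) \<and>
        h ` Y = UNIV \<and>
        (\<forall>y\<in>Y. h ((f ^^ m) y) = shift (h y)))"

definition D_chaotic :: "'a::metric_space set \<Rightarrow> ('a \<Rightarrow> 'a) \<Rightarrow> bool" where
  "D_chaotic X f \<longleftrightarrow>
     (\<exists>Y. Y \<subseteq> X \<and> Y \<noteq> {} \<and> compact Y \<and> f ` Y \<subseteq> Y \<and>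
        (\<forall>U V. openin (top_of_set Y) U \<and> openin (top_of_set Y) V \<and> U \<noteq> {} \<and> V \<noteq> {}
           \<longrightarrow> (\<exists>n>0. (f ^^ n) ` U \<inter> V \<noteq> {})) \<and>
        Y \<subseteq> closure {p\<in>Y. periodic_pt f p} \<and>
        (\<exists>\<delta>>0. \<forall>x\<in>Y. \<forall>\<epsilon>>0. \<exists>y\<in>Y. dist x y < \<epsilon> \<and>
           (\<exists>n. dist ((f ^^ n) x) ((f ^^ n) y) > \<delta>)))"

end

theory Submission
  imports Defs
begin


lemma continuous_funpow: "continuous_on UNIV g \<Longrightarrow> continuous_on UNIV (g ^^ n)"
  for g :: "'a::topological_space \<Rightarrow> 'a"
proof (induction n)
  case 0 then show ?case by (simp add: continuous_on_id)
next
  case (Suc n)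
  have "continuous_on UNIV (g \<circ> (g ^^ n))"
    using Suc by (intro continuous_on_compose) (auto intro: continuous_on_subset)
  then show ?case by simp
qed

definition smono :: "real set \<Rightarrow> (real \<Rightarrow> real) \<Rightarrow> bool" where
  "smono S g \<longleftrightarrow> (\<forall>x\<in>S. \<forall>y\<in>S. x < y \<longrightarrow> g x < g y) \<or> (\<forall>x\<in>S. \<forall>y\<in>S. x < y \<longrightarrow> g y < g x)"

lemma smono_comp: "smono S g \<Longrightarrow> g ` S \<subseteq> T \<Longrightarrow> smono T k \<Longrightarrow> smono S (k \<circ> g)"
  unfolding smono_def by (simp add: image_subset_iff) metis

lemma smono_subset: "smono S g \<Longrightarrow> T \<subseteq> S \<Longrightarrow> smono T g"
  unfolding smono_def by blast

lemma smono_inj: "smono S g \<Longrightarrow> inj_on g S"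
  unfolding smono_def inj_on_def by (metis linorder_neqE_linordered_idom order_less_irrefl)

lemma smono_between: "smono S g \<Longrightarrow> x \<in> S \<Longrightarrow> y \<in> S \<Longrightarrow> z \<in> S \<Longrightarrow> x \<le> y \<Longrightarrow> y \<le> z \<Longrightarrow>
   min (g x) (g z) \<le> g y \<and> g y \<le> max (g x) (g z)"
  unfolding smono_def
  by (metis dual_order.order_iff_strict max.coboundedI1 max.coboundedI2 min.coboundedI1 min.coboundedI2)

definition conv :: "real set \<Rightarrow> bool" where
  "conv S \<longleftrightarrow> (\<forall>x\<in>S. \<forall>z\<in>S. \<forall>y. x \<le> y \<and> y \<le> z \<longrightarrow> y \<in> S)"

definition sh :: "nat \<Rightarrow> (nat \<Rightarrow> bool) \<Rightarrow> (nat \<Rightarrow> bool)" where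
  "sh n s = (\<lambda>j. s (j + n))"

lemma sh_sh[simp]: "sh n (sh k s) = sh (n + k) s" by (simp add: sh_def algebra_simps)
lemma sh_0[simp]: "sh 0 s = s" by (simp add: sh_def)
lemma sh_app: "sh n s j = s (j + n)" by (simp add: sh_def)

lemma uncountable_bool_seq: "uncountable (UNIV :: (nat \<Rightarrow> bool) set)"
proof
  assume c: "countable (UNIV :: (nat \<Rightarrow> bool) set)"
  define g where "g = from_nat_into (UNIV :: (nat \<Rightarrow> bool) set)"
  have r: "range g = UNIV" using c by (simp add: g_def)
  define dg where "dg = (\<lambda>n. \<not> g n n)"
  have "dg \<in> range g" using r by simp
  then obtain k where "dg = g k" by blast
  then have "dg k = g k k" by simp
  moreover have "dg k = (\<not> g k k)" by (simp add: dg_def)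
  ultimately show False by simp
qed

lemma uncountable_cyl: "uncountable {s :: nat \<Rightarrow> bool. \<forall>j\<le>N. s j = w j}"
proof
  assume c: "countable {s :: nat \<Rightarrow> bool. \<forall>j\<le>N. s j = w j}"
  define e where "e = (\<lambda>\<alpha>::nat\<Rightarrow>bool. \<lambda>j. if j \<le> N then w j else \<alpha> (j - Suc N))"
  have "inj e"
  proof
    fix \<alpha> \<beta> assume "e \<alpha> = e \<beta>"
    show "\<alpha> = \<beta>"
    proof
      fix i
      have "e \<alpha> (i + Suc N) = e \<beta> (i + Suc N)" using \<open>e \<alpha> = e \<beta>\<close> by simp
      then show "\<alpha> i = \<beta> i" by (simp add: e_def)
    qed
  qed
  moreover have "range e \<subseteq> {s. \<forall>j\<le>N. s j = w j}" by (auto simp: e_def)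
  then have "countable (range e)" using c countable_subset by blast
  ultimately have "countable (UNIV :: (nat \<Rightarrow> bool) set)"
    using countable_image_inj_on by blast
  then show False using uncountable_bool_seq by simp
qed

locale hs =
  fixes f :: "real \<Rightarrow> real" and m :: nat and X :: "real set" and a0 a1 b0 b1 :: real
  assumes contf: "continuous_on UNIV f"
    and m1: "1 \<le> m"
    and Xinv: "f ` X \<subseteq> X"
    and ABX: "{a0..a1} \<union> {b0..b1} \<subseteq> X"
    and ord: "a0 \<le> a1" "a1 < b0" "b0 \<le> b1"
    and monoA: "\<And>x y. a0 \<le> x \<Longrightarrow> x < y \<Longrightarrow> y \<le> a1 \<Longrightarrow> (f^^m) x < (f^^m) y"
    and monoB: "\<And>x y. b0 \<le> x \<Longrightarrow> x < y \<Longrightarrow> y \<le> b1 \<Longrightarrow> (f^^m) y < (f^^m) x"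
    and covA: "{a0..a1} \<union> {b0..b1} \<subseteq> (f^^m) ` {a0..a1}"
    and covB: "{a0..a1} \<union> {b0..b1} \<subseteq> (f^^m) ` {b0..b1}"
begin

abbreviation G where "G \<equiv> f ^^ m"

definition P :: "(nat \<Rightarrow> bool) \<Rightarrow> nat \<Rightarrow> real set" where
  "P s j = (if s j then {b0..b1} else {a0..a1})"
definition K where "K s n = {x. \<forall>j\<le>n. (G^^j) x \<in> P s j}"
definition F where "F s = {x. \<forall>j. (G^^j) x \<in> P s j}"
definition Lam where "Lam = {x. \<forall>j. (G^^j) x \<in> {a0..a1} \<union> {b0..b1}}"
definition h where "h x = (\<lambda>j. (G^^j) x \<in> {b0..b1})"

lemma contG: "continuous_on UNIV G" by (rule continuous_funpow[OF contf])
lemma contGj: "continuous_on UNIV (G^^j)" by (rule continuous_funpow[OF contG])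

lemma GG: "(G^^j) ((G^^k) x) = (G^^(j+k)) x" by (simp add: funpow_add)

lemma P_sh[simp]: "P (sh n s) j = P s (j + n)" by (simp add: P_def sh_def)
lemma P_closed: "closed (P s j)" by (simp add: P_def)
lemma P_sub: "P s j \<subseteq> {a0..a1} \<union> {b0..b1}" by (auto simp: P_def)
lemma P_ne: "P s j \<noteq> {}" using ord by (auto simp: P_def)
lemma P_conv: "conv (P s j)" by (auto simp: P_def conv_def)
lemma AB_disj: "x \<in> {a0..a1} \<Longrightarrow> x \<in> {b0..b1} \<Longrightarrow> False" using ord by auto
lemma gap: "x \<in> {a0..a1} \<union> {b0..b1} \<Longrightarrow> y \<in> {a0..a1} \<union> {b0..b1} \<Longrightarrow>
    (x \<in> {b0..b1}) \<noteq> (y \<in> {b0..b1}) \<Longrightarrow> b0 - a1 \<le> dist x y"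
  using ord by (auto simp: dist_real_def)
lemma gap_pos: "0 < b0 - a1" using ord by simp
lemma P_cov: "{a0..a1} \<union> {b0..b1} \<subseteq> G ` P s j" using covA covB by (simp add: P_def)
lemma smono_P: "smono (P s j) G"
  unfolding smono_def P_def using monoA monoB by auto

lemma F_iff: "x \<in> F s \<longleftrightarrow> x \<in> Lam \<and> h x = s"
proof
  assume x: "x \<in> F s"
  have xj: "(G^^j) x \<in> P s j" for j using x by (simp add: F_def)
  have "x \<in> Lam" using xj P_sub unfolding Lam_def by blast
  moreover have "h x j = s j" for j
  proof (cases "s j")
    case True then show ?thesis using xj[of j] by (simp add: h_def P_def)
  next
    case False then show ?thesis using xj[of j] AB_disj by (auto simp: h_def P_def)
  qed
  ultimately show "x \<in> Lam \<and> h x = s" by auto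
next
  assume "x \<in> Lam \<and> h x = s"
  then show "x \<in> F s" by (auto simp: Lam_def h_def F_def P_def)
qed

lemma F_disj: "x \<in> F s \<Longrightarrow> x \<in> F t \<Longrightarrow> s = t" by (simp add: F_iff)

lemma h_G: "h ((G^^n) x) = sh n (h x)" by (simp add: h_def fun_eq_iff GG sh_def)

lemma Lam_G: "x \<in> Lam \<Longrightarrow> (G^^n) x \<in> Lam" by (simp add: Lam_def GG)

lemma Lam_closed: "closed Lam"
proof -
  have "Lam = (\<Inter>j. (G^^j) -` ({a0..a1} \<union> {b0..b1}))" by (auto simp: Lam_def)
  then show ?thesis by (auto intro!: closed_vimage contGj)
qed

lemma K_closed: "closed (K s n)"
proof -
  have "K s n = (\<Inter>j\<in>{..n}. (G^^j) -` P s j)" by (auto simp: K_def)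
  then show ?thesis by (auto intro!: closed_vimage contGj P_closed)
qed

lemma F_closed: "closed (F s)"
proof -
  have "F s = (\<Inter>j. (G^^j) -` P s j)" by (auto simp: F_def)
  then show ?thesis by (auto intro!: closed_vimage contGj P_closed)
qed

lemma K_sub: "K s n \<subseteq> P s 0" by (auto simp: K_def)
lemma K_mono: "n \<le> k \<Longrightarrow> K s k \<subseteq> K s n" by (auto simp: K_def)
lemma K_compact: "compact (K s n)"
proof -
  have "bounded (P s 0)" by (simp add: P_def)
  then show ?thesis using K_sub K_closed bounded_subset by (metis compact_eq_bounded_closed)
qed
lemma F_Inter: "F s = \<Inter> (range (K s))" by (auto simp: F_def K_def)
lemma F_sub_K: "F s \<subseteq> K s n" by (auto simp: F_def K_def)
lemma F_compact: "compact (F s)"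
proof -
  have "F s = K s 0 \<inter> F s" using F_sub_K by blast
  then show ?thesis using compact_Int_closed[OF K_compact F_closed] by metis
qed

lemma all_le_Suc: "(\<forall>j\<le>Suc n. Q j) \<longleftrightarrow> Q 0 \<and> (\<forall>j\<le>n. Q (Suc j))"
proof
  assume "Q 0 \<and> (\<forall>j\<le>n. Q (Suc j))"
  then show "\<forall>j\<le>Suc n. Q j" by (metis Suc_le_mono not0_implies_Suc)
qed auto

lemma K_Suc: "x \<in> K s (Suc n) \<longleftrightarrow> x \<in> P s 0 \<and> G x \<in> K (sh 1 s) n"
proof -
  have "x \<in> K s (Suc n) \<longleftrightarrow> (\<forall>j\<le>Suc n. (G^^j) x \<in> P s j)" by (simp add: K_def)
  also have "\<dots> \<longleftrightarrow> x \<in> P s 0 \<and> (\<forall>j\<le>n. (G^^Suc j) x \<in> P s (Suc j))"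
    using all_le_Suc[of n "\<lambda>j. (G^^j) x \<in> P s j"] by simp
  also have "\<dots> \<longleftrightarrow> x \<in> P s 0 \<and> G x \<in> K (sh 1 s) n"
    by (simp add: K_def funpow_Suc_right del: funpow.simps)
  finally show ?thesis .
qed

lemma K_cover: "y \<in> P s n \<Longrightarrow> \<exists>x\<in>K s n. (G^^n) x = y"
proof (induction n arbitrary: s y)
  case 0 then show ?case by (auto simp: K_def)
next
  case (Suc n)
  have "y \<in> P (sh 1 s) n" using Suc.prems by simp
  then obtain x' where x': "x' \<in> K (sh 1 s) n" "(G^^n) x' = y" using Suc.IH by blast
  have "x' \<in> P (sh 1 s) 0" using x' K_sub by blast
  then have "x' \<in> G ` P s 0" using P_cov P_sub by (metis P_sh subsetD)
  then obtain x where x: "x \<in> P s 0" "G x = x'" by blast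
  then have "x \<in> K s (Suc n)" using K_Suc x' by simp
  moreover have "(G^^Suc n) x = y" using x x' by (simp add: funpow_Suc_right del: funpow.simps)
  ultimately show ?case by blast
qed

lemma K_ne: "K s n \<noteq> {}"
  using K_cover[of _ s n] P_ne by blast

lemma F_ne: "F s \<noteq> {}"
  unfolding F_Inter by (rule compact_nest) (auto simp: K_compact K_ne K_mono)

lemma K_conv: "conv (K s n)"
proof (induction n arbitrary: s)
  case 0
  have "K s 0 = P s 0" by (auto simp: K_def)
  then show ?case using P_conv by simp
next
  case (Suc n)
  show ?case unfolding conv_def
  proof (intro ballI allI impI)
    fix x z y assume xz: "x \<in> K s (Suc n)" "z \<in> K s (Suc n)" and y: "x \<le> y \<and> y \<le> z"
    have xP: "x \<in> P s 0" "z \<in> P s 0" using xz K_Suc by auto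
    then have yP: "y \<in> P s 0" using y P_conv unfolding conv_def by blast
    have b: "min (G x) (G z) \<le> G y \<and> G y \<le> max (G x) (G z)"
      using smono_between[OF smono_P xP(1) yP xP(2)] y by blast
    have "G x \<in> K (sh 1 s) n" "G z \<in> K (sh 1 s) n" using xz K_Suc by auto
    then have mm: "min (G x) (G z) \<in> K (sh 1 s) n" "max (G x) (G z) \<in> K (sh 1 s) n"
      by (auto simp: min_def max_def)
    have "G y \<in> K (sh 1 s) n" using Suc.IH[of "sh 1 s"] b mm unfolding conv_def by blast
    then show "y \<in> K s (Suc n)" using K_Suc yP by simp
  qed
qed

lemma F_conv: "conv (F s)"
  unfolding conv_def
proof (intro ballI allI impI)
  fix x z y assume xz: "x \<in> F s" "z \<in> F s" and y: "x \<le> y \<and> y \<le> z"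
  have "y \<in> K s n" for n
  proof -
    have "x \<in> K s n" "z \<in> K s n" using xz F_sub_K by auto
    then show ?thesis using K_conv[of s n] y unfolding conv_def by blast
  qed
  then show "y \<in> F s" unfolding F_Inter by blast
qed

lemma F_G: "x \<in> F s \<Longrightarrow> G x \<in> F (sh 1 s)"
proof -
  assume x: "x \<in> F s"
  show ?thesis unfolding F_def
  proof (intro CollectI allI)
    fix j
    have "(G^^(Suc j)) x \<in> P s (Suc j)" using x by (simp add: F_def del: funpow.simps)
    then show "(G^^j) (G x) \<in> P (sh 1 s) j" by (simp add: funpow_Suc_right del: funpow.simps)
  qed
qed

lemma G_F: "G ` F s = F (sh 1 s)"
proof
  show "G ` F s \<subseteq> F (sh 1 s)" using F_G by blast
next
  show "F (sh 1 s) \<subseteq> G ` F s"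
  proof
    fix y assume y: "y \<in> F (sh 1 s)"
    then have "(G^^0) y \<in> P (sh 1 s) 0" unfolding F_def by blast
    then have "y \<in> P s 1" by simp
    then obtain x where x: "x \<in> P s 0" "G x = y" using P_cov P_sub by blast
    have "x \<in> F s" unfolding F_def
    proof (intro CollectI allI)
      fix j show "(G^^j) x \<in> P s j"
      proof (cases j)
        case 0 then show ?thesis using x by simp
      next
        case (Suc i)
        have "(G^^i) y \<in> P (sh 1 s) i" using y by (simp add: F_def)
        then show ?thesis using x Suc by (simp add: funpow_Suc_right del: funpow.simps)
      qed
    qed
    then show "y \<in> G ` F s" using x by blast
  qed
qed

lemma Gn_F: "(G^^n) ` F s = F (sh n s)"
proof (induction n arbitrary: s)
  case 0 then show ?case by simp
next
  case (Suc n)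
  have "(G^^Suc n) ` F s = (G^^n) ` (G ` F s)"
    by (simp add: funpow_Suc_right image_comp del: funpow.simps)
  also have "\<dots> = (G^^n) ` F (sh 1 s)" using G_F by simp
  also have "\<dots> = F (sh n (sh 1 s))" using Suc.IH by blast
  also have "sh n (sh 1 s) = sh (Suc n) s" by (simp add: sh_def algebra_simps)
  finally show ?case .
qed

lemma smono_Gn: "smono (F s) (G^^n)"
proof (induction n arbitrary: s)
  case 0 then show ?case by (simp add: smono_def)
next
  case (Suc n)
  have "F s \<subseteq> P s 0" using F_sub_K K_sub by blast
  then have "smono (F s) G" using smono_P smono_subset by blast
  moreover have "G ` F s \<subseteq> F (sh 1 s)" using G_F by blast
  ultimately have "smono (F s) ((G^^n) \<circ> G)"
    using smono_comp Suc.IH by blast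
  then show ?case by (simp only: funpow_Suc_right)
qed

lemma K_open: "open U \<Longrightarrow> F s \<subseteq> U \<Longrightarrow> \<exists>N. K s N \<subseteq> U"
proof (rule ccontr)
  assume U: "open U" "F s \<subseteq> U" and "\<not> (\<exists>N. K s N \<subseteq> U)"
  then have ne: "K s n - U \<noteq> {}" for n by blast
  have "\<Inter> (range (\<lambda>n. K s n - U)) \<noteq> {}"
  proof (rule compact_nest)
    show "compact (K s n - U)" for n using U(1) K_compact by (simp add: compact_diff)
    show "K s n - U \<noteq> {}" for n by (rule ne)
    show "K s n - U \<subseteq> K s k - U" if "k \<le> n" for k n using K_mono[OF that] by blast
  qed
  then show False using U(2) unfolding F_Inter by blast
qed

lemma agree_K: "x \<in> Lam \<Longrightarrow> (\<forall>j\<le>N. h x j = s j) \<Longrightarrow> x \<in> K s N"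
  by (auto simp: Lam_def h_def K_def P_def)

definition Nset where "Nset = {s. \<not> (\<exists>z. F s = {z})}"

lemma Nset_countable: "countable Nset"
proof -
  have "\<exists>q\<in>\<rat>. q \<in> F s" if sN: "s \<in> Nset" for s
  proof -
    obtain x where x: "x \<in> F s" using F_ne by blast
    obtain z where z: "z \<in> F s" "z \<noteq> x" using sN x unfolding Nset_def by blast
    have "\<exists>q\<in>\<rat>. min x z < q \<and> q < max x z" using z by (intro Rats_dense_in_real) auto
    then obtain q where q: "q \<in> \<rat>" "min x z < q" "q < max x z" by blast
    have mm: "min x z \<in> F s" "max x z \<in> F s" using x z by (auto simp: min_def max_def)
    have "q \<in> F s" using F_conv mm q(2,3) unfolding conv_def by (meson less_imp_le)
    then show ?thesis using q(1) by blast
  qed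
  then obtain \<rho> where \<rho>: "\<And>s. s \<in> Nset \<Longrightarrow> \<rho> s \<in> \<rat> \<and> \<rho> s \<in> F s" by metis
  have "inj_on \<rho> Nset"
  proof (rule inj_onI)
    fix s t assume st: "s \<in> Nset" "t \<in> Nset" "\<rho> s = \<rho> t"
    have "\<rho> s \<in> F s" using \<rho> st(1) by blast
    moreover have "\<rho> t \<in> F t" using \<rho> st(2) by blast
    ultimately show "s = t" using st(3) F_disj by simp
  qed
  moreover have "\<rho> ` Nset \<subseteq> \<rat>" using \<rho> by blast
  then have "countable (\<rho> ` Nset)" using countable_rat countable_subset by blast
  ultimately show ?thesis using countable_image_inj_on by blast
qed

lemma good_in_cyl: "\<exists>s. (\<forall>j\<le>N. s j = w j) \<and> s \<notin> Nset"
proof -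
  show ?thesis
  proof (rule ccontr)
    assume "\<not> ?thesis"
    then have "{s. \<forall>j\<le>N. s j = w j} \<subseteq> Nset" by blast
    then have "countable {s. \<forall>j\<le>N. s j = w j}" using Nset_countable countable_subset by blast
    then show False using uncountable_cyl by blast
  qed
qed

lemma good_single: "s \<notin> Nset \<Longrightarrow> \<exists>z. F s = {z}" by (simp add: Nset_def)

end


lemma shift_dist_agree:
  assumes "\<forall>j<N. a j = b j"
  shows "shift_dist a b \<le> 2 * (1/2)^N"
proof -
  define t where "t = (\<lambda>i. \<bar>of_bool (a i) - of_bool (b i)\<bar> / (2::real) ^ i)"
  have tb: "t i \<le> (1/2)^i" for i by (auto simp: t_def power_one_over)
  have t0: "0 \<le> t i" for i by (simp add: t_def)
  have tz: "i < N \<Longrightarrow> t i = 0" for i using assms by (simp add: t_def)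
  have sg: "summable (\<lambda>i. (1/2::real)^i)" by (rule summable_geometric) simp
  have st: "summable t" by (rule summable_comparison_test[OF _ sg]) (use tb t0 in auto)
  have "suminf t = (\<Sum>i. t (i + N)) + (\<Sum>i<N. t i)" by (rule suminf_split_initial_segment[OF st])
  also have "(\<Sum>i<N. t i) = 0" using tz by simp
  also have "(\<Sum>i. t (i + N)) \<le> (\<Sum>i. (1/2)^(i+N))"
  proof (rule suminf_le)
    show "summable (\<lambda>i. t (i + N))" using st by (simp add: summable_iff_shift)
    show "summable (\<lambda>i. (1/2::real)^(i+N))" using sg by (simp add: summable_iff_shift)
  qed (use tb in auto)
  also have "(\<Sum>i. (1/2::real)^(i+N)) = (1/2)^N * (\<Sum>i. (1/2)^i)"
    by (subst suminf_mult[OF sg, symmetric]) (simp add: power_add mult.commute)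
  also have "(\<Sum>i. (1/2::real)^i) = 2" by (simp add: suminf_geometric)
  finally show ?thesis by (simp add: shift_dist_def t_def)
qed

context hs begin

lemma Lam_sub: "Lam \<subseteq> {a0..a1} \<union> {b0..b1}"
proof
  fix x assume "x \<in> Lam"
  then have "(G^^0) x \<in> {a0..a1} \<union> {b0..b1}" unfolding Lam_def by blast
  then show "x \<in> {a0..a1} \<union> {b0..b1}" by simp
qed

lemma Lam_compact: "compact Lam"
proof -
  have "bounded ({a0..a1} \<union> {b0..b1})" by simp
  then have "bounded Lam" using Lam_sub bounded_subset by blast
  then show ?thesis using Lam_closed compact_eq_bounded_closed by blast
qed

lemma agree_near:
  assumes y: "y \<in> Lam"
  shows "\<exists>d>0. \<forall>y'\<in>Lam. dist y' y < d \<longrightarrow> (\<forall>j<N. h y' j = h y j)"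
proof -
  have "\<forall>j\<in>{..<N}. eventually (\<lambda>y'. dist ((G^^j) y') ((G^^j) y) < b0 - a1) (at y)"
  proof
    fix j
    have "isCont (G^^j) y" using contGj continuous_on_eq_continuous_at by blast
    then have "((G^^j) \<longlongrightarrow> (G^^j) y) (at y)" by (simp add: isCont_def)
    then show "eventually (\<lambda>y'. dist ((G^^j) y') ((G^^j) y) < b0 - a1) (at y)"
      using gap_pos by (rule tendstoD)
  qed
  then have "eventually (\<lambda>y'. \<forall>j\<in>{..<N}. dist ((G^^j) y') ((G^^j) y) < b0 - a1) (at y)"
    by (intro eventually_ball_finite) auto
  then obtain d where d: "d > 0" "\<And>y'. y' \<noteq> y \<Longrightarrow> dist y' y < d \<Longrightarrow>
      \<forall>j\<in>{..<N}. dist ((G^^j) y') ((G^^j) y) < b0 - a1"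
    unfolding eventually_at by blast
  have "\<forall>j<N. h y' j = h y j" if y': "y' \<in> Lam" "dist y' y < d" for y'
  proof (cases "y' = y")
    case False
    show ?thesis
    proof (intro allI impI)
      fix j assume "j < N"
      then have dj: "dist ((G^^j) y') ((G^^j) y) < b0 - a1" using d(2)[OF False y'(2)] by blast
      have "(G^^j) y' \<in> {a0..a1} \<union> {b0..b1}" "(G^^j) y \<in> {a0..a1} \<union> {b0..b1}"
        using y' y unfolding Lam_def by auto
      then show "h y' j = h y j" using gap dj unfolding h_def by fastforce
    qed
  qed simp
  then show ?thesis using d(1) by blast
qed

theorem BC: "BC_chaotic X f"
  unfolding BC_chaotic_def
proof (intro exI conjI)
  show "1 \<le> m" by (rule m1)
  show "Lam \<subseteq> X" using Lam_sub ABX by blast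
  show "compact Lam" by (rule Lam_compact)
  show "G ` Lam \<subseteq> Lam" using Lam_G[of _ 1] by auto
  show "\<forall>y\<in>Lam. \<forall>e>0. \<exists>d>0. \<forall>y'\<in>Lam. dist y' y < d \<longrightarrow> shift_dist (h y') (h y) < e"
  proof (intro ballI allI impI)
    fix y e assume y: "y \<in> Lam" and e: "(0::real) < e"
    obtain N where N: "(1/2::real)^N < e/2" using real_arch_pow_inv[of "e/2" "1/2"] e by auto
    obtain d where d: "d > 0" "\<forall>y'\<in>Lam. dist y' y < d \<longrightarrow> (\<forall>j<N. h y' j = h y j)"
      using agree_near[OF y] by blast
    have "shift_dist (h y') (h y) < e" if "y' \<in> Lam" "dist y' y < d" for y'
      using shift_dist_agree[of N "h y'" "h y"] d(2) that N by fastforce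
    then show "\<exists>d>0. \<forall>y'\<in>Lam. dist y' y < d \<longrightarrow> shift_dist (h y') (h y) < e" using d(1) by blast
  qed
  show "h ` Lam = UNIV"
  proof -
    have "s \<in> h ` Lam" for s
    proof -
      obtain x where "x \<in> F s" using F_ne by blast
      then have "x \<in> Lam" "h x = s" using F_iff by auto
      then show ?thesis by blast
    qed
    then show ?thesis by blast
  qed
  show "\<forall>y\<in>Lam. h (G y) = shift (h y)"
    using h_G[of 1] by (simp add: shift_def sh_def fun_eq_iff)
qed

end


lemma inj_singleton: "inj_on g S \<Longrightarrow> g ` S = {w} \<Longrightarrow> S \<noteq> {} \<Longrightarrow> \<exists>z. S = {z}"
proof -
  assume inj: "inj_on g S" and im: "g ` S = {w}" and ne: "S \<noteq> {}"
  obtain z where z: "z \<in> S" using ne by blast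
  have "y = z" if "y \<in> S" for y
  proof -
    have "g y = w" "g z = w" using im that z by blast+
    then show ?thesis using inj that z unfolding inj_on_def by metis
  qed
  then show ?thesis using z by blast
qed

context hs begin

definition S1 where "S1 = {x \<in> Lam. F (h x) = {x}}"
definition Y where "Y = closure S1"

lemma S1_Lam: "S1 \<subseteq> Lam" by (auto simp: S1_def)
lemma Y_Lam: "Y \<subseteq> Lam" unfolding Y_def using S1_Lam Lam_closed closure_minimal by blast
lemma S1_Y: "S1 \<subseteq> Y" unfolding Y_def by (rule closure_subset)
lemma Y_compact: "compact Y"
  using Y_Lam Lam_compact unfolding Y_def by (metis closed_closure compact_Int_closed inf.absorb_iff2)

lemma single_S1: "F s = {z} \<Longrightarrow> z \<in> S1"
proof -
  assume Fz: "F s = {z}"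
  then have "z \<in> Lam" "h z = s" using F_iff by auto
  then show "z \<in> S1" using Fz by (simp add: S1_def)
qed

lemma S1_ne: "S1 \<noteq> {}"
proof -
  obtain s where "s \<notin> Nset" using good_in_cyl[of 0 "\<lambda>_. True"] by blast
  then obtain z where "F s = {z}" using good_single by blast
  then show ?thesis using single_S1 by blast
qed

lemma S1_G: "x \<in> S1 \<Longrightarrow> G x \<in> S1"
proof -
  assume x: "x \<in> S1"
  then have "F (h x) = {x}" by (simp add: S1_def)
  then have "F (sh 1 (h x)) = {G x}" using G_F[of "h x"] by simp
  then show ?thesis using single_S1 by blast
qed

lemma Y_G: "G ` Y \<subseteq> Y"
proof -
  have "G ` S1 \<subseteq> Y" using S1_G S1_Y by blast
  moreover have "continuous_on (closure S1) G" using contG continuous_on_subset by blast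
  ultimately show ?thesis unfolding Y_def by (intro image_closure_subset) auto
qed

lemma cyl_ball:
  assumes x: "x \<in> S1" and e: "0 < e"
  shows "\<exists>N. \<forall>n\<ge>N. \<forall>y\<in>Lam. (\<forall>j\<le>n. h y j = h x j) \<longrightarrow> dist y x < e"
proof -
  have "F (h x) \<subseteq> ball x e" using x e by (simp add: S1_def)
  then obtain N where N: "K (h x) N \<subseteq> ball x e" using K_open by blast
  have "dist y x < e" if "n \<ge> N" "y \<in> Lam" "\<forall>j\<le>n. h y j = h x j" for n y
  proof -
    have "y \<in> K (h x) n" using agree_K that by blast
    then have "y \<in> ball x e" using K_mono[OF that(1)] N by blast
    then show ?thesis by (simp add: dist_commute)
  qed
  then show ?thesis by blast
qed

lemma fiber_single_from_image:
  assumes "F (sh n t) = {w}"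
  shows "\<exists>z. F t = {z}"
proof -
  have e: "(G^^n) ` F t = F (sh n t)" by (rule Gn_F)
  have i: "inj_on (G^^n) (F t)" by (rule smono_inj[OF smono_Gn])
  show ?thesis by (rule inj_singleton[OF i _ F_ne]) (use e assms in simp)
qed

lemma trans_G:
  assumes U: "open U" "U \<inter> Y \<noteq> {}" and V: "open V" "V \<inter> Y \<noteq> {}"
  shows "\<exists>n>0. \<exists>u\<in>U \<inter> Y. (G^^n) u \<in> V \<inter> Y"
proof -
  have "U \<inter> S1 \<noteq> {}" using U open_Int_closure_eq_empty unfolding Y_def by blast
  then obtain x where x: "x \<in> U" "x \<in> S1" by blast
  obtain e where e: "e > 0" "ball x e \<subseteq> U" using U(1) x(1) open_contains_ball by blast
  obtain N where N: "\<forall>y\<in>Lam. (\<forall>j\<le>N. h y j = h x j) \<longrightarrow> dist y x < e"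
    using cyl_ball[OF x(2) e(1)] by blast
  have "V \<inter> S1 \<noteq> {}" using V open_Int_closure_eq_empty unfolding Y_def by blast
  then obtain x' where x': "x' \<in> V" "x' \<in> S1" by blast
  define t where "t = (\<lambda>j. if j \<le> N then h x j else h x' (j - Suc N))"
  have sht: "sh (Suc N) t = h x'" by (simp add: t_def sh_def fun_eq_iff)
  have Fx': "F (h x') = {x'}" using x' by (simp add: S1_def)
  obtain z where z: "F t = {z}" using fiber_single_from_image[of "Suc N" t x'] sht Fx' by auto
  have zS: "z \<in> S1" using single_S1[OF z] .
  have hz: "h z = t" "z \<in> Lam" using z F_iff by auto
  have "dist z x < e" using N hz by (simp add: t_def)
  then have zU: "z \<in> U" using e(2) by (auto simp: dist_commute)
  have "(G^^Suc N) ` F t = F (sh (Suc N) t)" by (rule Gn_F)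
  then have "(G^^Suc N) z = x'" using z sht Fx' by simp
  then show ?thesis using zU zS x' S1_Y by (intro exI[of _ "Suc N"]) auto
qed

lemma sens_G:
  assumes x: "x \<in> Y" and e: "0 < e"
  shows "\<exists>N\<ge>1. \<exists>y0\<in>S1. \<exists>y1\<in>S1. dist y0 x < e \<and> dist y1 x < e \<and>
           (G^^N) y0 \<in> {a0..a1} \<and> (G^^N) y1 \<in> {b0..b1}"
proof -
  have "\<forall>e>0. \<exists>y\<in>S1. dist y x < e" using x unfolding Y_def closure_approachable by blast
  then obtain x' where x': "x' \<in> S1" "dist x' x < e/2" using e half_gt_zero by blast
  obtain N where N: "\<forall>y\<in>Lam. (\<forall>j\<le>N. h y j = h x' j) \<longrightarrow> dist y x' < e/2"
    using cyl_ball[OF x'(1), of "e/2"] e by auto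
  have pt: "\<exists>y\<in>S1. dist y x < e \<and> (G^^Suc N) y \<in> (if c then {b0..b1} else {a0..a1})" for c
  proof -
    obtain t where t: "\<forall>j\<le>Suc N. t j = (if j \<le> N then h x' j else c)" "t \<notin> Nset"
      using good_in_cyl[of "Suc N" "\<lambda>j. if j \<le> N then h x' j else c"] by blast
    obtain y where y: "F t = {y}" using t(2) good_single by blast
    have yS: "y \<in> S1" by (rule single_S1[OF y])
    have hy: "h y = t" "y \<in> Lam" using y F_iff by auto
    have "dist y x' < e/2" using N hy t(1) by simp
    then have "dist y x < e" using x'(2) dist_triangle_half_l[of y x' e x] by (simp add: dist_commute)
    moreover have "y \<in> F t" using y by simp
    then have "(G^^Suc N) y \<in> P t (Suc N)" unfolding F_def by blast
    moreover have "t (Suc N) = c" using t(1) by simp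
    ultimately have "(G^^Suc N) y \<in> (if c then {b0..b1} else {a0..a1})" by (simp add: P_def)
    then show ?thesis using yS \<open>dist y x < e\<close> by blast
  qed
  obtain y0 where y0: "y0 \<in> S1" "dist y0 x < e" "(G^^Suc N) y0 \<in> {a0..a1}"
    using pt[of False] by auto
  obtain y1 where y1: "y1 \<in> S1" "dist y1 x < e" "(G^^Suc N) y1 \<in> {b0..b1}"
    using pt[of True] by auto
  show ?thesis using y0 y1 by (intro exI[of _ "Suc N"]) auto
qed

end


context hs begin

lemma endpoints_periodic:
  assumes sm: "smono S \<phi>" and img: "\<phi> ` S = S" and a: "\<alpha> \<in> S" "\<forall>y\<in>S. \<alpha> \<le> y"
    and b: "\<beta> \<in> S" "\<forall>y\<in>S. y \<le> \<beta>"
  shows "\<phi> (\<phi> \<alpha>) = \<alpha> \<and> \<phi> (\<phi> \<beta>) = \<beta>"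
proof -
  have fa: "\<phi> \<alpha> \<in> S" "\<phi> \<beta> \<in> S" using a b img by auto
  obtain u where u: "u \<in> S" "\<phi> u = \<alpha>" using a img by (metis imageE)
  obtain v where v: "v \<in> S" "\<phi> v = \<beta>" using b img by (metis imageE)
  show ?thesis using sm unfolding smono_def
  proof
    assume inc: "\<forall>x\<in>S. \<forall>y\<in>S. x < y \<longrightarrow> \<phi> x < \<phi> y"
    have "\<phi> \<alpha> = \<alpha>"
    proof (cases "u = \<alpha>")
      case True then show ?thesis using u by simp
    next
      case False
      then have "\<alpha> < u" using a u by force
      then have "\<phi> \<alpha> < \<alpha>" using inc a u by metis
      then show ?thesis using a fa by force
    qed
    moreover have "\<phi> \<beta> = \<beta>"
    proof (cases "v = \<beta>")
      case True then show ?thesis using v by simp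
    next
      case False
      then have "v < \<beta>" using b v by force
      then have "\<beta> < \<phi> \<beta>" using inc b v by metis
      then show ?thesis using b fa by force
    qed
    ultimately show ?thesis by simp
  next
    assume dec: "\<forall>x\<in>S. \<forall>y\<in>S. x < y \<longrightarrow> \<phi> y < \<phi> x"
    have 1: "\<phi> \<alpha> = \<beta>"
    proof (cases "v = \<alpha>")
      case True then show ?thesis using v by simp
    next
      case False
      then have "\<alpha> < v" using a v by force
      then have "\<beta> < \<phi> \<alpha>" using dec a v by metis
      then show ?thesis using b fa by force
    qed
    have 2: "\<phi> \<beta> = \<alpha>"
    proof (cases "u = \<beta>")
      case True then show ?thesis using u by simp
    next
      case False
      then have "u < \<beta>" using b u by force
      then have "\<phi> \<beta> < \<alpha>" using dec b u by metis
      then show ?thesis using a fa by force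
    qed
    show ?thesis using 1 2 by simp
  qed
qed

lemma per_G:
  assumes x: "x \<in> S1" and e: "0 < e"
  shows "\<exists>p\<in>Y. dist p x < e \<and> (\<exists>q>0. (G^^q) p = p)"
proof -
  obtain N where N: "\<forall>y\<in>Lam. (\<forall>j\<le>N. h y j = h x j) \<longrightarrow> dist y x < e"
    using cyl_ball[OF x e] by blast
  define L where "L = Suc N"
  define t where "t = (\<lambda>j. h x (j mod L))"
  have sht: "sh L t = t" by (simp add: t_def sh_def fun_eq_iff)
  have close: "dist y x < e" if "y \<in> F t" for y
  proof -
    have "y \<in> Lam" "h y = t" using that F_iff by auto
    moreover have "\<forall>j\<le>N. t j = h x j" by (simp add: t_def L_def)
    ultimately show ?thesis using N by simp
  qed
  define \<phi> where "\<phi> = G^^L"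
  have img: "\<phi> ` F t = F t" unfolding \<phi>_def using Gn_F[of L t] sht by simp
  have sm: "smono (F t) \<phi>" unfolding \<phi>_def by (rule smono_Gn)
  obtain \<alpha> where a: "\<alpha> \<in> F t" "\<forall>y\<in>F t. \<alpha> \<le> y" using compact_attains_inf[OF F_compact F_ne] by blast
  obtain \<beta> where b: "\<beta> \<in> F t" "\<forall>y\<in>F t. y \<le> \<beta>" using compact_attains_sup[OF F_compact F_ne] by blast
  have pp: "\<phi> (\<phi> \<alpha>) = \<alpha> \<and> \<phi> (\<phi> \<beta>) = \<beta>" by (rule endpoints_periodic[OF sm img a b])
  have GLL: "(G^^(L+L)) z = \<phi> (\<phi> z)" for z by (simp add: \<phi>_def funpow_add)
  have "\<exists>l. l \<in> Y \<and> (l = \<alpha> \<or> l = \<beta>)"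
  proof (cases "\<alpha> = \<beta>")
    case True
    have "y = \<alpha>" if "y \<in> F t" for y using a(2) b(2) that True by (metis order_antisym)
    then have "F t = {\<alpha>}" using a(1) by blast
    then show ?thesis using single_S1 S1_Y by blast
  next
    case False
    define Pk where "Pk = (\<lambda>k s. (\<forall>j\<le>Suc k. s j = (if j \<le> k then t j else \<not> t j)) \<and> s \<notin> Nset)"
    have ex: "\<exists>s. Pk k s" for k
      unfolding Pk_def by (rule good_in_cyl[of "Suc k" "\<lambda>j. if j \<le> k then t j else \<not> t j"])
    define T where "T = (\<lambda>k. SOME s. Pk k s)"
    have T: "(\<forall>j\<le>Suc k. T k j = (if j \<le> k then t j else \<not> t j)) \<and> T k \<notin> Nset" for k
      using someI_ex[OF ex[of k]] unfolding T_def Pk_def by simp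
    have ex2: "\<exists>z. F (T k) = {z}" for k using T[of k] good_single by blast
    define Xs where "Xs = (\<lambda>k. SOME z. F (T k) = {z})"
    have Xs: "F (T k) = {Xs k}" for k using someI_ex[OF ex2[of k]] unfolding Xs_def .
    have XS1: "Xs k \<in> S1" for k using single_S1[OF Xs] .
    have hX: "h (Xs k) = T k" "Xs k \<in> Lam" for k using Xs[of k] F_iff by auto
    have XK: "Xs k \<in> K t k" for k
    proof (rule agree_K[OF hX(2)])
      show "\<forall>j\<le>k. h (Xs k) j = t j" using T[of k] hX(1) by simp
    qed
    have XF: "Xs k \<notin> F t" for k
    proof
      assume "Xs k \<in> F t"
      then have "h (Xs k) = t" using F_iff by auto
      then have "T k (Suc k) = t (Suc k)" using hX(1) by simp
      then show False using T[of k] by simp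
    qed
    have "seq_compact (K t 0)" by (rule compact_imp_seq_compact[OF K_compact])
    moreover have "\<forall>n. Xs n \<in> K t 0" using XK K_mono by blast
    ultimately obtain l r where lr: "l \<in> K t 0" "strict_mono r" "(Xs \<circ> r) \<longlonglongrightarrow> l"
      by (rule seq_compactE)
    have lK: "l \<in> K t n" for n
    proof (rule Lim_in_closed_set[OF K_closed _ _ lr(3)])
      have "Xs (r k) \<in> K t n" if "k \<ge> n" for k
      proof -
        have "n \<le> r k" using seq_suble[OF lr(2), of k] that by simp
        then show ?thesis using XK[of "r k"] K_mono by blast
      qed
      then show "eventually (\<lambda>k. (Xs \<circ> r) k \<in> K t n) sequentially"
        unfolding eventually_sequentially by auto
    qed simp
    have lF: "l \<in> F t" using lK unfolding F_Inter by blast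
    have lY: "l \<in> Y" unfolding Y_def
    proof (rule Lim_in_closed_set[OF closed_closure _ _ lr(3)])
      have "Xs (r k) \<in> closure S1" for k using XS1[of "r k"] closure_subset by blast
      then show "eventually (\<lambda>k. (Xs \<circ> r) k \<in> closure S1) sequentially" by simp
    qed simp
    have "l = \<alpha> \<or> l = \<beta>"
    proof (rule ccontr)
      assume "\<not> (l = \<alpha> \<or> l = \<beta>)"
      then have l1: "\<alpha> < l" "l < \<beta>" using a(2) b(2) lF by (metis order_le_less)+
      have "eventually (\<lambda>k. (Xs \<circ> r) k \<in> {\<alpha><..<\<beta>}) sequentially"
        using lr(3) l1 by (intro topological_tendstoD) (auto simp: comp_def)
      then obtain k where "Xs (r k) \<in> {\<alpha><..<\<beta>}" unfolding eventually_sequentially by auto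
      then have "\<alpha> \<le> Xs (r k) \<and> Xs (r k) \<le> \<beta>" by simp
      then have "Xs (r k) \<in> F t" using F_conv[unfolded conv_def] a(1) b(1) by blast
      then show False using XF by blast
    qed
    then show ?thesis using lY by blast
  qed
  then obtain l where l: "l \<in> Y" "l = \<alpha> \<or> l = \<beta>" by blast
  have "l \<in> F t" using l(2) a(1) b(1) by blast
  then have "dist l x < e" by (rule close)
  moreover have "(G^^(L+L)) l = l" using GLL[of l] pp l(2) by metis
  moreover have "L + L > 0" by (simp add: L_def)
  ultimately show ?thesis using l(1) by blast
qed

lemma per_Y:
  assumes x: "x \<in> Y" and e: "0 < e"
  shows "\<exists>p\<in>Y. dist p x < e \<and> (\<exists>q>0. (G^^q) p = p)"
proof -
  have "\<forall>e>0. \<exists>y\<in>S1. dist y x < e" using x unfolding Y_def closure_approachable by blast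
  then obtain x' where x': "x' \<in> S1" "dist x' x < e/2" using e half_gt_zero by blast
  obtain p where p: "p \<in> Y" "dist p x' < e/2" "\<exists>q>0. (G^^q) p = p"
    using per_G[OF x'(1), of "e/2"] e by auto
  have "dist p x < e" using p(2) x'(2) dist_triangle_half_l[of p x' e x] by (simp add: dist_commute)
  then show ?thesis using p by blast
qed

end


context hs begin

definition Yf where "Yf = Y \<union> f ` Y"

lemma Yf_repr: "x \<in> Yf \<Longrightarrow> \<exists>e\<le>1. \<exists>y\<in>Y. x = (f^^e) y"
proof -
  assume "x \<in> Yf"
  then consider "x \<in> Y" | y where "y \<in> Y" "x = f y" unfolding Yf_def by blast
  then show ?thesis
  proof cases
    case 1 then show ?thesis by (intro exI[of _ 0]) auto
  next
    case 2 then show ?thesis by (intro exI[of _ 1]) auto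
  qed
qed

lemma cont_eps: "0 < e \<Longrightarrow> \<exists>d>0. \<forall>y'. dist y' y < d \<longrightarrow> dist ((f^^k) y') ((f^^k) y) < e"
proof -
  assume e: "0 < e"
  have "isCont (f^^k) y" using continuous_funpow[OF contf, of k] continuous_on_eq_continuous_at by blast
  then show ?thesis using e unfolding continuous_at_eps_delta by blast
qed

lemma per_f: "(G^^q) p = p \<Longrightarrow> 0 < q \<Longrightarrow> periodic_pt f p"
proof -
  assume "(G^^q) p = p" "0 < q"
  then have "(f^^(m*q)) p = p" "0 < m * q" using m1 by (simp_all add: funpow_mult)
  then show ?thesis unfolding periodic_pt_def by blast
qed

lemma reduce:
  assumes m2: "m = 2" and U: "openin (top_of_set Yf) U" "U \<noteq> {}"
  shows "\<exists>U0 e. open U0 \<and> e \<le> (1::nat) \<and> U0 \<inter> Y \<noteq> {} \<and> (\<forall>y\<in>Y \<inter> U0. (f^^e) y \<in> U)"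
proof -
  obtain T where T: "open T" "U = Yf \<inter> T" using U(1) openin_open by blast
  obtain w where w: "w \<in> U" using U(2) by blast
  show ?thesis
  proof (cases "w \<in> Y")
    case True
    have "\<forall>y\<in>Y \<inter> T. (f^^0) y \<in> U" using T by (auto simp: Yf_def)
    then show ?thesis using T w True by (intro exI[of _ T] exI[of _ 0]) auto
  next
    case False
    then obtain y where y: "y \<in> Y" "w = f y" using w T by (auto simp: Yf_def)
    have o: "open (f -` T)" using T(1) contf by (rule open_vimage)
    have "\<forall>y\<in>Y \<inter> f -` T. (f^^1) y \<in> U" using T by (auto simp: Yf_def)
    moreover have "y \<in> Y \<inter> f -` T" using y w T by auto
    ultimately show ?thesis using o by (intro exI[of _ "f -` T"] exI[of _ 1]) auto
  qed
qed

lemma G2: "m = 2 \<Longrightarrow> (G^^n) = f^^(2*n)" by (simp add: funpow_mult)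

theorem Dev: assumes m2: "m = 2" shows "D_chaotic X f"
  unfolding D_chaotic_def
proof (intro exI[of _ Yf] conjI)
  have YX: "Y \<subseteq> X" using Y_Lam Lam_sub ABX by blast
  then show "Yf \<subseteq> X" using Xinv unfolding Yf_def by blast
  show "Yf \<noteq> {}" using S1_ne S1_Y unfolding Yf_def by blast
  have "compact (f ` Y)" by (rule compact_continuous_image[OF continuous_on_subset[OF contf] Y_compact]) simp
  then show "compact Yf" unfolding Yf_def using Y_compact by (rule compact_Un[rotated])
  have ffY: "f ` f ` Y \<subseteq> Y"
  proof
    fix z assume "z \<in> f ` f ` Y"
    then obtain y where "y \<in> Y" "z = f (f y)" by blast
    moreover have "f (f y) = G y" using m2 by (simp add: numeral_2_eq_2)
    ultimately show "z \<in> Y" using Y_G by auto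
  qed
  then show "f ` Yf \<subseteq> Yf" unfolding Yf_def by blast
  show "\<forall>U V. openin (top_of_set Yf) U \<and> openin (top_of_set Yf) V \<and> U \<noteq> {} \<and> V \<noteq> {}
           \<longrightarrow> (\<exists>n>0. (f ^^ n) ` U \<inter> V \<noteq> {})"
  proof (intro allI impI)
    fix U V assume UV: "openin (top_of_set Yf) U \<and> openin (top_of_set Yf) V \<and> U \<noteq> {} \<and> V \<noteq> {}"
    obtain U0 eU where U0: "open U0" "eU \<le> (1::nat)" "U0 \<inter> Y \<noteq> {}" "\<forall>y\<in>Y \<inter> U0. (f^^eU) y \<in> U"
      using reduce[OF m2] UV by metis
    obtain V0 eV where V0: "open V0" "eV \<le> (1::nat)" "V0 \<inter> Y \<noteq> {}" "\<forall>y\<in>Y \<inter> V0. (f^^eV) y \<in> V"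
      using reduce[OF m2] UV by metis
    obtain n u where nu: "n > 0" "u \<in> U0 \<inter> Y" "(G^^n) u \<in> V0 \<inter> Y"
      using trans_G[OF U0(1,3) V0(1,3)] by blast
    define k where "k = 2*n + eV - eU"
    have k0: "k > 0" using nu(1) U0(2) by (simp add: k_def)
    have uU: "(f^^eU) u \<in> U" using U0(4) nu(2) by blast
    have "(f^^k) ((f^^eU) u) = (f^^(k + eU)) u" by (simp add: funpow_add)
    also have "k + eU = eV + 2*n" using nu(1) U0(2) by (simp add: k_def)
    also have "(f^^(eV + 2*n)) u = (f^^eV) ((G^^n) u)" using G2[OF m2] by (simp add: funpow_add)
    finally have "(f^^k) ((f^^eU) u) \<in> V" using V0(4) nu(3) by auto
    then show "\<exists>n>0. (f ^^ n) ` U \<inter> V \<noteq> {}" using uU k0 by blast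
  qed
  show "Yf \<subseteq> closure {p \<in> Yf. periodic_pt f p}"
  proof
    fix x assume x: "x \<in> Yf"
    obtain e y where ey: "e \<le> (1::nat)" "y \<in> Y" "x = (f^^e) y" using Yf_repr[OF x] by blast
    have "\<exists>p\<in>{p \<in> Yf. periodic_pt f p}. dist p x < \<epsilon>" if \<epsilon>: "0 < \<epsilon>" for \<epsilon>
    proof -
      obtain d where d: "d > 0" "\<forall>y'. dist y' y < d \<longrightarrow> dist ((f^^e) y') ((f^^e) y) < \<epsilon>"
        using cont_eps[OF \<epsilon>] by blast
      obtain p q where p: "p \<in> Y" "dist p y < d" "q > 0" "(G^^q) p = p" using per_Y[OF ey(2) d(1)] by blast
      have pp: "periodic_pt f p" using per_f p(3,4) by blast
      have "(f^^e) p \<in> Yf" using p(1) ey(1) unfolding Yf_def by (cases e) auto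
      moreover have "periodic_pt f ((f^^e) p)"
      proof -
        obtain k where k: "k > 0" "(f^^k) p = p" using pp unfolding periodic_pt_def by blast
        have "(f^^k) ((f^^e) p) = (f^^e) ((f^^k) p)" by (metis add.commute comp_apply funpow_add)
        then show ?thesis using k unfolding periodic_pt_def by auto
      qed
      moreover have "dist ((f^^e) p) x < \<epsilon>" using d(2) p(2) ey(3) by blast
      ultimately show ?thesis by blast
    qed
    then show "x \<in> closure {p \<in> Yf. periodic_pt f p}" unfolding closure_approachable by blast
  qed
  show "\<exists>\<delta>>0. \<forall>x\<in>Yf. \<forall>\<epsilon>>0. \<exists>y\<in>Yf. dist x y < \<epsilon> \<and> (\<exists>n. \<delta> < dist ((f ^^ n) x) ((f ^^ n) y))"
  proof (intro exI[of _ "(b0 - a1)/3"] conjI ballI allI impI)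
    show "0 < (b0 - a1)/3" using gap_pos by simp
    fix x \<epsilon> assume x: "x \<in> Yf" and \<epsilon>: "(0::real) < \<epsilon>"
    obtain e y where ey: "e \<le> (1::nat)" "y \<in> Y" "x = (f^^e) y" using Yf_repr[OF x] by blast
    obtain d where d: "d > 0" "\<forall>y'. dist y' y < d \<longrightarrow> dist ((f^^e) y') ((f^^e) y) < \<epsilon>"
      using cont_eps[OF \<epsilon>] by blast
    obtain N y0 y1 where N: "N \<ge> 1" "y0 \<in> S1" "y1 \<in> S1" "dist y0 y < d" "dist y1 y < d"
      "(G^^N) y0 \<in> {a0..a1}" "(G^^N) y1 \<in> {b0..b1}"
      using sens_G[OF ey(2) d(1)] by blast
    define n where "n = 2*N - e"
    have fn: "(f^^n) ((f^^e) z) = (G^^N) z" for z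
    proof -
      have "n + e = 2 * N" using N(1) ey(1) by (simp add: n_def)
      have "(f^^n) ((f^^e) z) = (f^^(n+e)) z" by (simp add: funpow_add)
      also have "\<dots> = (G^^N) z" using G2[OF m2] \<open>n + e = 2 * N\<close> by simp
      finally show ?thesis .
    qed
    have g: "b0 - a1 \<le> dist ((G^^N) y0) ((G^^N) y1)" using gap[of "(G^^N) y0" "(G^^N) y1"] N(6,7) AB_disj by auto
    have "(b0 - a1)/3 < dist ((G^^N) y) ((G^^N) y0) \<or> (b0 - a1)/3 < dist ((G^^N) y) ((G^^N) y1)"
      using g dist_triangle[of "(G^^N) y0" "(G^^N) y1" "(G^^N) y"] gap_pos by (simp add: dist_commute) linarith
    moreover have "(f^^e) y0 \<in> Yf" "(f^^e) y1 \<in> Yf" using N(2,3) S1_Y ey(1) unfolding Yf_def by (cases e; auto)+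
    moreover have "dist x ((f^^e) y0) < \<epsilon>" "dist x ((f^^e) y1) < \<epsilon>"
      using d(2) N(4,5) ey(3) by (auto simp: dist_commute)
    ultimately show "\<exists>y\<in>Yf. dist x y < \<epsilon> \<and> (\<exists>n. (b0 - a1)/3 < dist ((f ^^ n) x) ((f ^^ n) y))"
      using fn ey(3) by metis
  qed
qed

end


definition sq :: "(nat \<Rightarrow> bool) \<Rightarrow> (nat \<Rightarrow> bool) \<Rightarrow> nat \<Rightarrow> bool" where
  "sq u \<alpha> n = (\<exists>k j. j < k \<and> (n = 4^k + j \<and> u j \<or> n = 4^k + k + j \<or> n = 4^k + 2*k + j \<and> \<alpha> j))"

lemma pow4: "4^k + 4*k \<le> (4::nat)^Suc k"
proof (induction k)
  case 0 then show ?case by simp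
next
  case (Suc k)
  have a: "4*k \<le> 3 * 4^k" using Suc.IH by simp
  have b: "1 \<le> (4::nat)^k" by simp
  have c: "4 + 4*k \<le> 12 * 4^k" using a b by linarith
  then show ?case by simp
qed

lemma k_le_pow4: "k \<le> (4::nat)^k"
proof -
  have "k < 2^k" by (rule less_exp)
  also have "(2::nat)^k \<le> 4^k" by (rule power_mono) auto
  finally show ?thesis by simp
qed

lemma blk_uniq:
  assumes "4^k + i = 4^k' + i'" "i < 4*k" "i' < 4*k'"
  shows "k = (k'::nat)"
proof (rule ccontr)
  assume "k \<noteq> k'"
  then consider "k < k'" | "k' < k" by linarith
  then show False
  proof cases
    case 1
    have "4^k + i < 4^Suc k" using pow4[of k] assms(2) by linarith
    also have "(4::nat)^Suc k \<le> 4^k'" using 1 by (intro power_increasing) auto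
    finally show False using assms(1) by linarith
  next
    case 2
    have "4^k' + i' < 4^Suc k'" using pow4[of k'] assms(3) by linarith
    also have "(4::nat)^Suc k' \<le> 4^k" using 2 by (intro power_increasing) auto
    finally show False using assms(1) by linarith
  qed
qed

lemma sq_char:
  assumes i: "i < 4*k"
  shows "sq u \<alpha> (4^k + i) = (i < k \<and> u i \<or> k \<le> i \<and> i < 2*k \<or> 2*k \<le> i \<and> i < 3*k \<and> \<alpha> (i - 2*k))"
proof
  assume "sq u \<alpha> (4^k + i)"
  then obtain k' j where kj: "j < k'" and
    d: "4^k + i = 4^k' + j \<and> u j \<or> 4^k + i = 4^k' + k' + j \<or> 4^k + i = 4^k' + 2*k' + j \<and> \<alpha> j"
    unfolding sq_def by blast
  from d show "i < k \<and> u i \<or> k \<le> i \<and> i < 2*k \<or> 2*k \<le> i \<and> i < 3*k \<and> \<alpha> (i - 2*k)"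
  proof (elim disjE conjE)
    assume e: "4^k + i = 4^k' + j" "u j"
    then have "k = k'" using blk_uniq[OF e(1) i] kj by linarith
    then show ?thesis using e kj by simp
  next
    assume e: "4^k + i = 4^k' + k' + j"
    then have "k = k'" using blk_uniq[of k i k' "k' + j"] i kj by simp
    then show ?thesis using e kj by simp
  next
    assume e: "4^k + i = 4^k' + 2*k' + j" "\<alpha> j"
    then have "k = k'" using blk_uniq[of k i k' "2*k' + j"] i kj by simp
    then show ?thesis using e kj by simp
  qed
next
  assume "i < k \<and> u i \<or> k \<le> i \<and> i < 2*k \<or> 2*k \<le> i \<and> i < 3*k \<and> \<alpha> (i - 2*k)"
  then show "sq u \<alpha> (4^k + i)"
  proof (elim disjE conjE)
    assume "i < k" "u i" then show ?thesis unfolding sq_def by blast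
  next
    assume a: "k \<le> i" "i < 2*k"
    then have "4^k + i = 4^k + k + (i - k)" "i - k < k" by auto
    then show ?thesis unfolding sq_def by blast
  next
    assume a: "2*k \<le> i" "i < 3*k" "\<alpha> (i - 2*k)"
    then have "4^k + i = 4^k + 2*k + (i - 2*k)" "i - 2*k < k" by auto
    then show ?thesis using a(3) unfolding sq_def by blast
  qed
qed

lemma sq_u: "j < k \<Longrightarrow> sq u \<alpha> (j + 4^k) = u j"
  using sq_char[of j k u \<alpha>] by (simp add: add.commute)
lemma sq_one: "j < k \<Longrightarrow> sq u \<alpha> (4^k + k + j)"
  using sq_char[of "k + j" k u \<alpha>] by (simp add: add.assoc)
lemma sq_al: "j < k \<Longrightarrow> sq u \<alpha> (4^k + 2*k + j) = \<alpha> j"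
  using sq_char[of "2*k + j" k u \<alpha>] by (simp add: add.assoc)
lemma sq_zero: "j < k \<Longrightarrow> \<not> sq u \<alpha> (4^k + 3*k + j)"
  using sq_char[of "3*k + j" k u \<alpha>] by (simp add: add.assoc)

lemma sq_diff:
  assumes "\<alpha> j \<noteq> \<beta> j"
  shows "\<exists>n\<ge>M. sq u \<alpha> n \<noteq> sq u \<beta> n"
proof -
  define k where "k = Suc (j + M)"
  have jk: "j < k" by (simp add: k_def)
  have "M \<le> 4^k" using k_le_pow4[of k] by (simp add: k_def)
  then show ?thesis using sq_al[OF jk, of u \<alpha>] sq_al[OF jk, of u \<beta>] assms
    by (intro exI[of _ "4^k + 2*k + j"]) auto
qed

lemma sq_inj: "sq u \<alpha> = sq u \<beta> \<Longrightarrow> \<alpha> = \<beta>"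
proof
  fix j assume e: "sq u \<alpha> = sq u \<beta>"
  show "\<alpha> j = \<beta> j"
  proof (rule ccontr)
    assume "\<alpha> j \<noteq> \<beta> j"
    then obtain n where "sq u \<alpha> n \<noteq> sq u \<beta> n" using sq_diff[of \<alpha> j \<beta> 0 u] by blast
    then show False using e by simp
  qed
qed

lemma per_mult: "(g ^^ q) p = p \<Longrightarrow> (g ^^ (q * c)) p = p"
proof (induction c)
  case 0 then show ?case by simp
next
  case (Suc c)
  have "q * Suc c = q * c + q" by simp
  then have "(g ^^ (q * Suc c)) p = (g ^^ (q * c)) ((g ^^ q) p)" by (simp only: funpow_add comp_apply)
  then show ?case using Suc by simp
qed

lemma sq_nonper:
  assumes v: "\<And>j. v (j + q) = v j" and q: "0 < q"
  shows "\<exists>n\<ge>M. sq u \<alpha> n \<noteq> v n"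
proof (rule ccontr)
  assume "\<not> ?thesis"
  then have eq: "\<And>n. n \<ge> M \<Longrightarrow> sq u \<alpha> n = v n" by auto
  have vc: "v (j + q * c) = v j" for j c
  proof (induction c)
    case 0 then show ?case by simp
  next
    case (Suc c)
    have "v (j + q * Suc c) = v ((j + q * c) + q)" by (simp add: algebra_simps)
    then show ?case using v Suc by simp
  qed
  define k where "k = M + q + 1"
  define P0 where "P0 = 4^k + 3*k"
  have kM: "M \<le> P0" using k_le_pow4[of k] by (simp add: k_def P0_def)
  have zero: "\<not> v (P0 + i)" if "i < q" for i
  proof -
    have "i < k" using that by (simp add: k_def)
    then have "\<not> sq u \<alpha> (P0 + i)" using sq_zero[of i k u \<alpha>] by (simp add: P0_def)
    moreover have "sq u \<alpha> (P0 + i) = v (P0 + i)" using eq kM by simp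
    ultimately show ?thesis by simp
  qed
  have allz: "\<not> v n" for n
  proof -
    define w where "w = n + q * P0 - P0"
    have "1 * P0 \<le> q * P0" using q by (intro mult_le_mono1) simp
    then have "P0 \<le> q * P0" by simp
    then have w: "n + q * P0 = P0 + w" unfolding w_def by linarith
    have "v n = v (n + q * P0)" using vc by simp
    also have "\<dots> = v (P0 + w mod q + q * (w div q))" using w by (metis add.assoc mod_mult_div_eq mult.commute)
    also have "\<dots> = v (P0 + w mod q)" by (rule vc)
    finally show ?thesis using zero[of "w mod q"] q by simp
  qed
  have "sq u \<alpha> (4^(Suc k) + Suc k + 0)" by (rule sq_one) simp
  moreover have "M \<le> 4^(Suc k) + Suc k + 0" using k_le_pow4[of "Suc k"] by (simp add: k_def)
  ultimately show False using eq allz by auto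
qed

lemma limsup_pos:
  assumes c: "0 < c" and fr: "\<And>M. \<exists>n\<ge>M. c \<le> Xs n"
  shows "0 < limsup (\<lambda>n. ereal (Xs n))"
proof -
  have "ereal c \<le> limsup (\<lambda>n. ereal (Xs n))" unfolding limsup_INF_SUP
  proof (rule INF_greatest)
    fix M :: nat
    obtain n where n: "n \<ge> M" "c \<le> Xs n" using fr by blast
    then show "ereal c \<le> (SUP m\<in>{M..}. ereal (Xs m))" by (intro SUP_upper2[of n]) auto
  qed
  moreover have "0 < ereal c" using c by simp
  ultimately show ?thesis by (rule less_le_trans[rotated])
qed

lemma liminf_zero:
  assumes nn: "\<And>n. 0 \<le> Xs n" and fr: "\<And>e M. 0 < e \<Longrightarrow> \<exists>n\<ge>M. Xs n < e"
  shows "liminf (\<lambda>n. ereal (Xs n)) = 0"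
proof (rule antisym)
  show "liminf (\<lambda>n. ereal (Xs n)) \<le> 0"
  proof (rule ereal_le_epsilon2)
    fix e :: real assume e: "0 < e"
    show "liminf (\<lambda>n. ereal (Xs n)) \<le> 0 + ereal e" unfolding liminf_SUP_INF
    proof (rule SUP_least)
      fix M :: nat
      obtain n where n: "n \<ge> M" "Xs n < e" using fr[OF e] by blast
      then show "(INF m\<in>{M..}. ereal (Xs m)) \<le> 0 + ereal e" by (intro INF_lower2[of n]) auto
    qed
  qed
  show "0 \<le> liminf (\<lambda>n. ereal (Xs n))" unfolding liminf_SUP_INF
    by (rule SUP_upper2[of 0]) (auto intro!: INF_greatest simp: nn)
qed


context hs begin

lemma fG: "(f^^(m*n)) x = (G^^n) x" by (simp add: funpow_mult)

lemma mn_ge: "n \<le> m * n" using m1 by simp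

lemma gap_h:
  assumes "x \<in> Lam" "y \<in> Lam" "h x n \<noteq> h y n"
  shows "b0 - a1 \<le> dist ((f^^(m*n)) x) ((f^^(m*n)) y)"
proof -
  have "(G^^n) x \<in> {a0..a1} \<union> {b0..b1}" "(G^^n) y \<in> {a0..a1} \<union> {b0..b1}"
    using assms(1,2) unfolding Lam_def by blast+
  then show ?thesis using gap assms(3) unfolding fG h_def by blast
qed

theorem LY: "LY_chaotic X f"
proof -
  obtain u where u: "u \<notin> Nset" using good_in_cyl[of 0 "\<lambda>_. True"] by blast
  obtain z where z: "F u = {z}" using good_single[OF u] by blast
  define pt where "pt = (\<lambda>s. SOME x. x \<in> F s)"
  have pt: "pt s \<in> F s" for s using F_ne[of s] unfolding pt_def by (simp add: some_in_eq)
  define xa where "xa = (\<lambda>\<alpha>. pt (sq u \<alpha>))"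
  have xaL: "xa \<alpha> \<in> Lam" "h (xa \<alpha>) = sq u \<alpha>" for \<alpha> using pt[of "sq u \<alpha>"] F_iff unfolding xa_def by auto
  define S where "S = range xa"
  have injxa: "inj xa"
  proof
    fix \<alpha> \<beta> assume "xa \<alpha> = xa \<beta>"
    then have "sq u \<alpha> = sq u \<beta>" using xaL by metis
    then show "\<alpha> = \<beta>" by (rule sq_inj)
  qed
  have unc: "uncountable S"
  proof
    assume "countable S"
    then have "countable (UNIV :: (nat \<Rightarrow> bool) set)"
      using countable_image_inj_on[OF _ injxa] unfolding S_def by blast
    then show False using uncountable_bool_seq by simp
  qed
  have SX: "S \<subseteq> X" using xaL Lam_sub ABX unfolding S_def by blast
  have pair: "0 < limsup (\<lambda>n. ereal (dist ((f^^n) x) ((f^^n) y))) \<and>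
              liminf (\<lambda>n. ereal (dist ((f^^n) x) ((f^^n) y))) = 0"
    if xy: "x \<in> S" "y \<in> S" "x \<noteq> y" for x y
  proof
    obtain \<alpha> \<beta> where ab: "x = xa \<alpha>" "y = xa \<beta>" using xy unfolding S_def by blast
    then have "\<alpha> \<noteq> \<beta>" using xy(3) by blast
    then obtain j where j: "\<alpha> j \<noteq> \<beta> j" by blast
    show "0 < limsup (\<lambda>n. ereal (dist ((f^^n) x) ((f^^n) y)))"
    proof (rule limsup_pos[OF gap_pos])
      fix M
      obtain n where n: "n \<ge> M" "sq u \<alpha> n \<noteq> sq u \<beta> n" using sq_diff[of \<alpha> j \<beta> M u] j by blast
      then have "b0 - a1 \<le> dist ((f^^(m*n)) x) ((f^^(m*n)) y)"
        using gap_h[of x y n] xaL ab by simp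
      moreover have "M \<le> m * n" using n(1) mn_ge[of n] by linarith
      ultimately show "\<exists>n\<ge>M. b0 - a1 \<le> dist ((f^^n) x) ((f^^n) y)" by blast
    qed
    show "liminf (\<lambda>n. ereal (dist ((f^^n) x) ((f^^n) y))) = 0"
    proof (rule liminf_zero)
      fix e :: real and M :: nat assume e: "0 < e"
      have "F u \<subseteq> ball z (e/2)" using z e by simp
      then obtain N0 where N0: "K u N0 \<subseteq> ball z (e/2)" using K_open by blast
      define k where "k = Suc (N0 + M)"
      define n where "n = (4::nat)^k"
      have near: "dist ((G^^n) (xa \<gamma>)) z < e/2" for \<gamma>
      proof -
        have "(G^^n) (xa \<gamma>) \<in> Lam" using Lam_G xaL by blast
        moreover have "\<forall>j\<le>N0. h ((G^^n) (xa \<gamma>)) j = u j"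
        proof (intro allI impI)
          fix j assume "j \<le> N0"
          then have "j < k" by (simp add: k_def)
          then have "sq u \<gamma> (j + n) = u j" unfolding n_def by (rule sq_u)
          then show "h ((G^^n) (xa \<gamma>)) j = u j" using h_G xaL by (simp add: sh_def)
        qed
        ultimately have "(G^^n) (xa \<gamma>) \<in> K u N0" using agree_K by blast
        then show ?thesis using N0 by (auto simp: dist_commute)
      qed
      have "dist ((G^^n) x) ((G^^n) y) < e"
        using near[of \<alpha>] near[of \<beta>] ab dist_triangle_half_r[of z "(G^^n) x" e "(G^^n) y"]
        by (simp add: dist_commute)
      moreover have "M \<le> m * n" using k_le_pow4[of k] mn_ge[of n] unfolding n_def k_def by linarith
      ultimately have "dist ((f^^(m*n)) x) ((f^^(m*n)) y) < e \<and> M \<le> m * n" by (simp add: fG)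
      then show "\<exists>n\<ge>M. dist ((f^^n) x) ((f^^n) y) < e" by blast
    qed simp
  qed
  have per: "0 < limsup (\<lambda>n. ereal (dist ((f^^n) x) ((f^^n) p)))"
    if x: "x \<in> S" and p: "p \<in> X" "periodic_pt f p" for x p
  proof -
    obtain \<alpha> where xa: "x = xa \<alpha>" using x unfolding S_def by blast
    obtain q where q: "q > 0" "(f^^q) p = p" using p(2) unfolding periodic_pt_def by blast
    have Gq: "(G^^q) p = p" using per_mult[OF q(2), of m] by (simp add: funpow_mult mult.commute)
    show ?thesis
    proof (cases "p \<in> Lam")
      case True
      have hp: "h p = sh q (h p)" using h_G[of q p] Gq by simp
      have v: "h p (j + q) = h p j" for j using fun_cong[OF hp, of j] by (simp add: sh_def)
      show ?thesis
      proof (rule limsup_pos[OF gap_pos])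
        fix M
        obtain n where n: "n \<ge> M" "sq u \<alpha> n \<noteq> h p n" using sq_nonper[of "h p" q M u \<alpha>, OF v q(1)] by blast
        then have "b0 - a1 \<le> dist ((f^^(m*n)) x) ((f^^(m*n)) p)"
          using gap_h[of x p n] xaL xa True by simp
        moreover have "M \<le> m * n" using n(1) mn_ge[of n] by linarith
        ultimately show "\<exists>n\<ge>M. b0 - a1 \<le> dist ((f^^n) x) ((f^^n) p)" by blast
      qed
    next
      case False
      then obtain j0 where j0: "(G^^j0) p \<notin> {a0..a1} \<union> {b0..b1}" unfolding Lam_def by blast
      define w where "w = (G^^j0) p"
      have "open (- ({a0..a1} \<union> {b0..b1}))" by auto
      then obtain c where c: "c > 0" "ball w c \<subseteq> - ({a0..a1} \<union> {b0..b1})"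
        using j0 open_contains_ball unfolding w_def by blast
      show ?thesis
      proof (rule limsup_pos[OF c(1)])
        fix M
        define n where "n = j0 + q * M"
        have "(G^^(q*M)) p = p" by (rule per_mult[OF Gq])
        then have Gn: "(G^^n) p = w" unfolding n_def w_def by (simp add: funpow_add)
        have "(G^^n) x \<in> {a0..a1} \<union> {b0..b1}" using xaL xa unfolding Lam_def by blast
        then have "(G^^n) x \<notin> ball w c" using c(2) by blast
        then have "c \<le> dist ((G^^n) x) w" by (simp add: dist_commute)
        then have "c \<le> dist ((f^^(m*n)) x) ((f^^(m*n)) p)" using Gn by (simp add: fG)
        moreover have "M \<le> m * n"
        proof -
          have "M \<le> q * M" using q(1) by simp
          then show ?thesis using mn_ge[of n] unfolding n_def by linarith
        qed
        ultimately show "\<exists>n\<ge>M. c \<le> dist ((f^^n) x) ((f^^n) p)" by blast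
      qed
    qed
  qed
  show ?thesis unfolding LY_chaotic_def
  proof (intro exI[of _ S] conjI)
    show "S \<subseteq> X" by (rule SX)
    show "uncountable S" by (rule unc)
    show "\<forall>x\<in>S. \<forall>y\<in>S. x \<noteq> y \<longrightarrow>
      0 < limsup (\<lambda>n. ereal (dist ((f^^n) x) ((f^^n) y))) \<and> liminf (\<lambda>n. ereal (dist ((f^^n) x) ((f^^n) y))) = 0"
      using pair by blast
    show "\<forall>x\<in>S. \<forall>p\<in>X. periodic_pt f p \<longrightarrow> 0 < limsup (\<lambda>n. ereal (dist ((f^^n) x) ((f^^n) p)))"
      using per by blast
  qed
qed

end


lemma exp_lower_sum: "0 \<le> (x::real) \<Longrightarrow> (\<Sum>m<n. x^m / fact m) \<le> exp x"
proof -
  assume x: "0 \<le> x"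
  obtain t where t: "\<bar>t\<bar> \<le> \<bar>x\<bar>" "exp x = (\<Sum>m<n. (x ^ m) / fact m) + (exp t / fact n) * x ^ n"
    using Maclaurin_exp_le by blast
  have "0 \<le> (exp t / fact n) * x ^ n" using x by simp
  then show ?thesis using t by argo
qed

lemma exp_upper_sum: "0 \<le> (x::real) \<Longrightarrow> x^n / fact n < 1 \<Longrightarrow> exp x \<le> (\<Sum>m<n. x^m / fact m) / (1 - x^n / fact n)"
proof -
  assume x: "0 \<le> x" and q: "x^n / fact n < 1"
  obtain t where t: "\<bar>t\<bar> \<le> \<bar>x\<bar>" "exp x = (\<Sum>m<n. (x ^ m) / fact m) + (exp t / fact n) * x ^ n"
    using Maclaurin_exp_le by blast
  have "t \<le> x" using t(1) x by (simp add: abs_le_iff)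
  then have "exp t \<le> exp x" by simp
  then have "(exp t / fact n) * x ^ n \<le> exp x * (x^n / fact n)" using x
    by (simp add: divide_right_mono mult_right_mono)
  moreover have "exp x * (1 - x^n / fact n) = exp x - exp x * (x^n / fact n)" by (simp add: algebra_simps)
  ultimately have "exp x * (1 - x^n / fact n) \<le> (\<Sum>m<n. x^m / fact m)" using t(2) by argo
  then show ?thesis using q by (simp add: pos_le_divide_eq)
qed

lemma e1: "1.8221 \<le> exp (0.6::real)"
proof -
  have "1.8221 \<le> (\<Sum>m<8. (0.6::real)^m / fact m)" by (simp add: eval_nat_numeral)
  also have "\<dots> \<le> exp 0.6" by (rule exp_lower_sum) simp
  finally show ?thesis .
qed

lemma e2: "exp (0.6::real) \<le> 1.8222"
proof -
  have "exp (0.6::real) \<le> (\<Sum>m<8. (0.6::real)^m / fact m) / (1 - 0.6^8 / fact 8)"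
    by (rule exp_upper_sum) (simp_all add: eval_nat_numeral)
  also have "\<dots> \<le> 1.8222" by (simp add: eval_nat_numeral)
  finally show ?thesis .
qed

lemma e5: "exp (3.4888::real) \<le> 32.98"
proof -
  have "exp (3.4888::real) \<le> (\<Sum>m<20. (3.4888::real)^m / fact m) / (1 - 3.4888^20 / fact 20)"
    by (rule exp_upper_sum) (simp_all add: eval_nat_numeral)
  also have "\<dots> \<le> 32.98" by (simp add: eval_nat_numeral)
  finally show ?thesis .
qed

lemma e3: "exp (0.9::real) \<le> 2.4597"
proof -
  have "exp (0.9::real) \<le> (\<Sum>m<12. (0.9::real)^m / fact m) / (1 - 0.9^12 / fact 12)"
    by (rule exp_upper_sum) (simp_all add: eval_nat_numeral)
  also have "\<dots> \<le> 2.4597" by (simp add: eval_nat_numeral)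
  finally show ?thesis .
qed

lemma e4: "32 \<le> exp (3.4884::real)"
proof -
  have "32 \<le> (\<Sum>m<20. (3.4884::real)^m / fact m)" by (simp add: eval_nat_numeral)
  also have "\<dots> \<le> exp 3.4884" by (rule exp_lower_sum) simp
  finally show ?thesis .
qed

lemma e6: "exp (2.7388::real) < 16"
proof -
  have "exp (2.7388::real) \<le> (\<Sum>m<20. (2.7388::real)^m / fact m) / (1 - 2.7388^20 / fact 20)"
    by (rule exp_upper_sum) (simp_all add: eval_nat_numeral)
  also have "\<dots> < 16" by (simp add: eval_nat_numeral)
  finally show ?thesis .
qed

lemma e7: "128 < exp (4.8618::real)"
proof -
  have "128 < (\<Sum>m<24. (4.8618::real)^m / fact m)" by (simp add: eval_nat_numeral)
  also have "\<dots> \<le> exp 4.8618" by (rule exp_lower_sum) simp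
  finally show ?thesis .
qed

lemma numerics:
  fixes r :: real
  assumes r: "2.6 \<le> r" "r \<le> 2.9"
  shows "2 < fr r 2" "0 < fr r (fr r 2)" "fr r (fr r 2) \<le> 1/2"
    "fr r (fr r 2) < fr r (fr r (fr r 2))" "fr r (fr r (fr r 2)) < 2"
proof -
  have r: "26/10 \<le> r" "r \<le> 29/10" using r by simp_all
  define E where "E = exp (r - 2)"
  define E0 where "E0 = exp ((06/10)::real)"
  define d where "d = r - (26/10)"
  have d0: "0 \<le> d" using r by (simp add: d_def)
  have E0b: "(18221/10000) \<le> E0" "E0 \<le> (18222/10000)" using e1 e2 by (simp_all add: E0_def)
  have "E = E0 * exp d" unfolding E_def E0_def d_def by (simp flip: exp_add)
  moreover have "1 + d \<le> exp d" by (rule exp_ge_add_one_self)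
  ultimately have "E0 * (1 + d) \<le> E" using E0b by simp
  then have EE0a: "E0 + E0 * d \<le> E" by (simp add: algebra_simps)
  have "(18221/10000) * d \<le> E0 * d" using E0b d0 by (intro mult_right_mono) auto
  then have EE0': "(18221/10000) * d \<le> E - E0" using EE0a by argo
  have E1: "1 \<le> E" using r by (simp add: E_def)
  have "exp (09/10) = E * exp ((29/10) - r)" unfolding E_def by (simp flip: exp_add)
  moreover have "1 + ((29/10) - r) \<le> exp ((29/10) - r)" by (rule exp_ge_add_one_self)
  ultimately have "E * (1 + ((29/10) - r)) \<le> exp (09/10)" using E1 by (simp add: E_def)
  moreover have "1 * ((29/10) - r) \<le> E * ((29/10) - r)" using E1 r by (intro mult_right_mono) auto
  ultimately have E9: "E + ((29/10) - r) \<le> (24597/10000)" using e3 by (simp add: algebra_simps)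
  have b: "fr r 2 = 4 * E" by (simp add: fr_def E_def)
  show "2 < fr r 2" using b E1 by simp
  define Q where "Q = 3*r - 4 - 4*E"
  have "exp Q = exp (r-2) * exp (r-2) * exp (r - 4*E)" unfolding Q_def by (simp flip: exp_add)
  then have a: "fr r (fr r 2) = 16 * exp Q" by (simp add: b fr_def E_def power2_eq_square)
  define a0 where "a0 = 16 * exp ((38/10) - 4*E0)"
  have "exp ((38/10) - 4*E0) \<le> exp (-(34884/10000))" using E0b by simp
  also have "\<dots> = 1 / exp (34884/10000)" by (simp add: exp_minus field_simps)
  also have "\<dots> \<le> 1/32" using e4 by (simp add: divide_simps)
  finally have a0u: "a0 \<le> 1/2" by (simp add: a0_def)
  have "1 / (3298/100) \<le> 1 / exp ((34888/10000)::real)" using e5 by (simp add: divide_simps)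
  also have "\<dots> = exp (-(34888/10000))" by (simp add: exp_minus field_simps)
  also have "\<dots> \<le> exp ((38/10) - 4*E0)" using E0b by simp
  finally have a0l: "16 / (3298/100) \<le> a0" by (simp add: a0_def)
  define y where "y = 4*(E - E0) - 3*d"
  have y0: "0 \<le> y" using EE0' d0 unfolding y_def by argo
  have aa0: "exp Q = exp ((38/10) - 4*E0) * exp (- y)" unfolding Q_def y_def d_def by (simp flip: exp_add)
  have "exp (-y) \<le> 1" using y0 by simp
  then have au: "fr r (fr r 2) \<le> a0" unfolding a a0_def aa0 by simp
  have apos: "0 < fr r (fr r 2)" unfolding a by simp
  show "0 < fr r (fr r 2)" by (rule apos)
  show "fr r (fr r 2) \<le> 1/2" using au a0u by simp
  have "1 - y \<le> exp (-y)" using exp_ge_add_one_self[of "-y"] by simp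
  then have "a0 * (1 - y) \<le> a0 * exp (-y)" using a0l by (intro mult_left_mono) auto
  then have al: "a0 - a0 * y \<le> fr r (fr r 2)" unfolding a a0_def aa0 by (simp add: algebra_simps)
  have "a0 * y \<le> a0 * (4*(E - E0))" using a0l d0 unfolding y_def by (intro mult_left_mono) auto
  also have "\<dots> \<le> 1/2 * (4*(E - E0))" using a0u EE0' d0 by (intro mult_right_mono) auto
  finally have ay: "a0 * y \<le> 2 * (E - E0)" by simp
  define A where "A = fr r (fr r 2)"
  have "exp (2*Q + r - A) = exp Q * exp Q * exp (r - A)" by (simp flip: exp_add)
  moreover have Aq: "A = 16 * exp Q" unfolding A_def by (rule a)
  ultimately have c: "fr r A = 256 * exp (2*Q + r - A)" by (simp add: fr_def power2_eq_square)
  have "2*Q + r - A \<le> -(48618/10000)"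
    using al ay EE0' a0l d0 E0b unfolding Q_def A_def d_def by argo
  then have "exp (2*Q + r - A) \<le> exp (-(48618/10000))" by simp
  also have "\<dots> = 1 / exp (48618/10000)" by (simp add: exp_minus field_simps)
  also have "\<dots> < 1/128" using e7 by (simp add: divide_simps)
  finally show "fr r (fr r (fr r 2)) < 2" using c unfolding A_def by simp
  have "exp (Q + r - A) = exp Q * exp (r - A)" by (simp flip: exp_add)
  then have Ae: "A * exp (r - A) = 16 * exp (Q + r - A)" using Aq by simp
  have "-(27388/10000) \<le> Q + r - A" using E9 au a0u unfolding Q_def A_def by argo
  then have "exp (-(27388/10000)) \<le> exp (Q + r - A)" by simp
  moreover have "exp (-(27388/10000)::real) = 1 / exp (27388/10000)" by (simp add: exp_minus field_simps)
  moreover have "1/16 < 1 / exp ((27388/10000)::real)" using e6 by (simp add: divide_simps)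
  ultimately have "1 < A * exp (r - A)" using Ae by argo
  then have "A * 1 < A * (A * exp (r - A))" using apos unfolding A_def by (intro mult_strict_left_mono) auto
  then show "fr r (fr r 2) < fr r (fr r (fr r 2))" by (simp add: A_def fr_def power2_eq_square algebra_simps)
qed


lemma fr_cont: "continuous_on S (fr r)"
  unfolding fr_def[abs_def] by (intro continuous_intros)

lemma fr_deriv: "(fr r has_real_derivative (x * (2 - x) * exp (r - x))) (at x)"
proof -
  have "((\<lambda>x. x^2 * exp (r - x)) has_real_derivative (x * (2 - x) * exp (r - x))) (at x)"
    by (rule derivative_eq_intros refl | simp add: algebra_simps power2_eq_square)+
  then show ?thesis unfolding fr_def[abs_def] by simp
qed

lemma fr_inc: "0 \<le> x \<Longrightarrow> x < y \<Longrightarrow> y \<le> 2 \<Longrightarrow> fr r x < fr r y"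
proof -
  assume a: "0 \<le> x" "x < y" "y \<le> 2"
  show ?thesis
  proof (rule DERIV_pos_imp_increasing_open[OF a(2) _ fr_cont])
    fix t assume "x < t" "t < y"
    then have "0 < t * (2 - t) * exp (r - t)" using a by (intro mult_pos_pos) auto
    then show "\<exists>d. (fr r has_real_derivative d) (at t) \<and> 0 < d" using fr_deriv by blast
  qed
qed

lemma fr_dec: "2 \<le> x \<Longrightarrow> x < y \<Longrightarrow> fr r y < fr r x"
proof -
  assume a: "2 \<le> x" "x < y"
  show ?thesis
  proof (rule DERIV_neg_imp_decreasing_open[OF a(2) _ fr_cont])
    fix t assume "x < t" "t < y"
    then have "t * (2 - t) * exp (r - t) < 0" using a by (intro mult_neg_pos mult_pos_neg) auto
    then show "\<exists>d. (fr r has_real_derivative d) (at t) \<and> d < 0" using fr_deriv by blast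
  qed
qed

lemma fr_le_max: "0 \<le> x \<Longrightarrow> fr r x \<le> fr r 2"
  using fr_inc[of x 2 r] fr_dec[of 2 x r] by (cases "x < 2"; cases "x = 2") auto

lemma f2: "(g ^^ 2) x = g (g x)" by (simp add: numeral_2_eq_2)
lemma f3: "(g ^^ 3) x = g (g (g x))" by (simp add: numeral_3_eq_3)


theorem proposition4p16:
  fixes r :: real
  assumes "2.6 \<le> r" and "r \<le> 2.9"
  shows "(fr r ^^ 2) 2 < (fr r ^^ 3) 2 \<and> (fr r ^^ 3) 2 < 2 \<and> 2 < fr r 2
         \<and> fr r ` {(fr r ^^ 2) 2 .. fr r 2} \<subseteq> {(fr r ^^ 2) 2 .. fr r 2}
         \<and> LY_chaotic {(fr r ^^ 2) 2 .. fr r 2} (fr r)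
         \<and> BC_chaotic {(fr r ^^ 2) 2 .. fr r 2} (fr r)
         \<and> D_chaotic {(fr r ^^ 2) 2 .. fr r 2} (fr r)"
proof -
  define b where "b = fr r 2"
  define a where "a = fr r b"
  define c3 where "c3 = fr r a"
  note num = numerics[OF assms]
  have b2: "2 < b" and a0: "0 < a" and ah: "a \<le> 1/2" and ac: "a < c3" and c2: "c3 < 2"
    using num by (simp_all add: a_def b_def c3_def)
  have e2: "(fr r ^^ 2) 2 = a" by (simp add: f2 a_def b_def)
  have e3: "(fr r ^^ 3) 2 = c3" by (simp add: f3 a_def b_def c3_def)
  define g where "g = (\<lambda>x. fr r (fr r x))"
  have gG: "(fr r ^^ 2) = g" by (simp add: g_def fun_eq_iff f2)
  have gc: "continuous_on S g" for S unfolding g_def fr_def by (intro continuous_intros)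
  have inv: "fr r ` {a..b} \<subseteq> {a..b}"
  proof
    fix y assume "y \<in> fr r ` {a..b}"
    then obtain x where x: "a \<le> x" "x \<le> b" "y = fr r x" by auto
    have "fr r x \<le> b" unfolding b_def using x a0 by (intro fr_le_max) simp
    moreover have "a \<le> fr r x"
    proof (cases "x \<le> 2")
      case True
      have "fr r a \<le> fr r x" using x True a0 fr_inc[of a x r] by (cases "a = x") auto
      then show ?thesis using ac c3_def by simp
    next
      case False
      have "fr r b \<le> fr r x" using x False fr_dec[of x b r] by (cases "x = b") auto
      then show ?thesis by (simp add: a_def)
    qed
    ultimately show "y \<in> {a..b}" using x by simp
  qed
  obtain xs where xs: "2 \<le> xs" "xs \<le> b" "fr r xs = 2"
    using IVT2'[of "fr r" b 2 2] b2 a_def ah fr_cont by (force simp: b_def)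
  have xs2: "2 < xs" using xs b2 b_def by (cases "xs = 2") auto
  have xsb: "xs < b" using xs ah a_def by (cases "xs = b") auto
  have g2: "g 2 = a" and gxs: "g xs = b" and gb: "g b = c3"
    by (simp_all add: g_def a_def b_def c3_def xs)
  have ginc: "g p < g q" if "2 \<le> p" "p < q" "q \<le> xs" for p q
  proof -
    have "fr r q < fr r p" using fr_dec that by simp
    moreover have "2 \<le> fr r q" using fr_dec[of q xs r] that xs by (cases "q = xs") auto
    ultimately show ?thesis unfolding g_def by (rule fr_dec[rotated])
  qed
  have gdec: "g q < g p" if "xs \<le> p" "p < q" "q \<le> b" for p q
  proof -
    have "fr r q < fr r p" using fr_dec[of p q r] that xs2 by simp
    moreover have "fr r p \<le> 2" using fr_dec[of xs p r] that xs xs2 by (cases "p = xs") auto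
    moreover have "a \<le> fr r q" using fr_dec[of q b r] that xs2 a_def by (cases "q = b") auto
    ultimately have "fr r (fr r q) < fr r (fr r p)" using a0 fr_inc[of "fr r q" "fr r p" r] by linarith
    then show ?thesis unfolding g_def .
  qed
  obtain u0 where u0: "2 \<le> u0" "u0 \<le> xs" "g u0 = 2"
    using IVT'[of g 2 2 xs] g2 gxs ah b2 xs2 gc by force
  obtain u1 where u1: "xs \<le> u1" "u1 \<le> b" "g u1 = 2"
    using IVT2'[of g b 2 xs] gb gxs c2 b2 xsb gc by force
  have u1x: "xs < u1" using u1 gxs b2 by (cases "u1 = xs") auto
  obtain x0 where x0: "u0 \<le> x0" "x0 \<le> xs" "g x0 = u1"
    using IVT'[of g u0 u1 xs] u0 u1 gxs xs2 u1x gc by force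
  have u1b: "u1 < b" using u1 gb c2 by (cases "u1 = b") auto
  have x0x: "x0 < xs" using x0 gxs u1b by (cases "x0 = xs") auto
  obtain x1 where x1: "xs \<le> x1" "x1 \<le> u1" "g x1 = u1"
    using IVT2'[of g u1 u1 xs] u1 gxs u1x xs2 gc by force
  have x1x: "xs < x1" using x1 gxs u1b by (cases "x1 = xs") auto
  have covA: "{u0..x0} \<union> {x1..u1} \<subseteq> g ` {u0..x0}"
  proof
    fix y assume y: "y \<in> {u0..x0} \<union> {x1..u1}"
    then have "2 \<le> y" "y \<le> u1" using u0 x0 x1 u1x x0x by auto
    then obtain x where "u0 \<le> x" "x \<le> x0" "g x = y"
      using IVT'[of g u0 y x0] u0 x0 gc by force
    then show "y \<in> g ` {u0..x0}" by force
  qed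
  have covB: "{u0..x0} \<union> {x1..u1} \<subseteq> g ` {x1..u1}"
  proof
    fix y assume y: "y \<in> {u0..x0} \<union> {x1..u1}"
    then have "2 \<le> y" "y \<le> u1" using u0 x0 x1 u1x x0x by auto
    then obtain x where "x1 \<le> x" "x \<le> u1" "g x = y"
      using IVT2'[of g u1 y x1] u1 x1 gc by force
    then show "y \<in> g ` {x1..u1}" by force
  qed
  interpret H: hs "fr r" 2 "{a..b}" u0 x0 x1 u1
  proof
    show "continuous_on UNIV (fr r)" by (rule fr_cont)
    show "1 \<le> (2::nat)" by simp
    show "fr r ` {a..b} \<subseteq> {a..b}" by (rule inv)
    show "{u0..x0} \<union> {x1..u1} \<subseteq> {a..b}" using u0 x0 x1 u1 ah xs2 x0x x1x by auto
    show "u0 \<le> x0" "x0 < x1" "x1 \<le> u1" using x0 x0x x1x x1 by auto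
    show "(fr r ^^ 2) x < (fr r ^^ 2) y" if "u0 \<le> x" "x < y" "y \<le> x0" for x y
      unfolding gG using ginc that u0 x0 by simp
    show "(fr r ^^ 2) y < (fr r ^^ 2) x" if "x1 \<le> x" "x < y" "y \<le> u1" for x y
      unfolding gG using gdec that x1 u1 by simp
    show "{u0..x0} \<union> {x1..u1} \<subseteq> (fr r ^^ 2) ` {u0..x0}" unfolding gG by (rule covA)
    show "{u0..x0} \<union> {x1..u1} \<subseteq> (fr r ^^ 2) ` {x1..u1}" unfolding gG by (rule covB)
  qed
  have "LY_chaotic {a..b} (fr r)" by (rule H.LY)
  moreover have "BC_chaotic {a..b} (fr r)" by (rule H.BC)
  moreover have "D_chaotic {a..b} (fr r)" by (rule H.Dev) simp
  ultimately show ?thesis using e2 e3 ac c2 b2 inv by (simp add: b_def)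
qed


end
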